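(* Let $(G,\Omega)$ be an $\ell$-permutation group that is o-2 transitive, and let $g,h\in G$ with $h\neq1$ and $\mathrm{supp}(h)\cap\mathrm{supp}(h^g)=\emptyset$. Then there are $f,k\in G$ such that $$[h^{-1},h^f]\,[h^{-g},h^{gk}]\neq[h^{-g},h^{gk}]\,[h^{-1},h^f].$$
   Context: An $\ell$-permutation group $(G,\Omega)$ is a totally ordered set $\Omega$ with a subgroup $G$ of $\mathrm{Aut}(\Omega,\leqslant)$ (acting on the right) closed under pointwise max and min. It is o-2 transitive if $G$ acts transitively on pairs $(\alpha,\beta)$ with $\alpha<\beta$. $\mathrm{supp}(g)=\{\alpha:\alpha g\ne\alpha\}$, $g^f=f^{-1}gf$, $h^{-g}=(h^g)^{-1}$, $[a,b]=a^{-1}b^{-1}ab$. *)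

theory Defs
  imports Main
begin

text \<open>Omega is modelled as a linearly ordered type 'a; permutations act on the right,
  so alpha(g h) = (alpha g) h, i.e. the product g h is the function h o g.\<close>

definition order_aut :: "('a::linorder \<Rightarrow> 'a) \<Rightarrow> bool" where
  "order_aut f \<longleftrightarrow> bij f \<and> strict_mono f"

definition pmult :: "('a \<Rightarrow> 'a) \<Rightarrow> ('a \<Rightarrow> 'a) \<Rightarrow> ('a \<Rightarrow> 'a)" where
  "pmult g h = h \<circ> g"

definition pinv :: "('a \<Rightarrow> 'a) \<Rightarrow> ('a \<Rightarrow> 'a)" where
  "pinv g = inv g"

definition pconj :: "('a \<Rightarrow> 'a) \<Rightarrow> ('a \<Rightarrow> 'a) \<Rightarrow> ('a \<Rightarrow> 'a)" where
  "pconj g f = pmult (pmult (pinv f) g) f"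

definition pcomm :: "('a \<Rightarrow> 'a) \<Rightarrow> ('a \<Rightarrow> 'a) \<Rightarrow> ('a \<Rightarrow> 'a)" where
  "pcomm a b = pmult (pmult (pmult (pinv a) (pinv b)) a) b"

definition supp :: "('a \<Rightarrow> 'a) \<Rightarrow> 'a set" where
  "supp g = {\<alpha>. g \<alpha> \<noteq> \<alpha>}"

definition l_perm_group :: "('a::linorder \<Rightarrow> 'a) set \<Rightarrow> bool" where
  "l_perm_group G \<longleftrightarrow>
     (\<forall>g\<in>G. order_aut g) \<and> id \<in> G \<and>
     (\<forall>g\<in>G. \<forall>h\<in>G. pmult g h \<in> G) \<and>
     (\<forall>g\<in>G. pinv g \<in> G) \<and>
     (\<forall>g\<in>G. \<forall>h\<in>G. (\<lambda>\<alpha>. max (g \<alpha>) (h \<alpha>)) \<in> G \<and> (\<lambda>\<alpha>. min (g \<alpha>) (h \<alpha>)) \<in> G)"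

definition o2_transitive :: "('a::linorder \<Rightarrow> 'a) set \<Rightarrow> bool" where
  "o2_transitive G \<longleftrightarrow>
     (\<forall>\<alpha> \<beta> \<gamma> \<delta>. \<alpha> < \<beta> \<and> \<gamma> < \<delta> \<longrightarrow> (\<exists>g\<in>G. g \<alpha> = \<gamma> \<and> g \<beta> = \<delta>))"

end

theory Submission
  imports Defs
begin

lemma lpg_aut: "l_perm_group G \<Longrightarrow> g \<in> G \<Longrightarrow> bij g \<and> strict_mono g"
  by (auto simp: l_perm_group_def order_aut_def)

lemma lpg_mult: "l_perm_group G \<Longrightarrow> g \<in> G \<Longrightarrow> h \<in> G \<Longrightarrow> pmult g h \<in> G"
  by (auto simp: l_perm_group_def)

lemma lpg_inv: "l_perm_group G \<Longrightarrow> g \<in> G \<Longrightarrow> pinv g \<in> G"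
  by (auto simp: l_perm_group_def)

lemma lpg_max: "l_perm_group G \<Longrightarrow> g \<in> G \<Longrightarrow> h \<in> G \<Longrightarrow> (\<lambda>\<alpha>. max (g \<alpha>) (h \<alpha>)) \<in> G"
  by (auto simp: l_perm_group_def)

lemma lpg_min: "l_perm_group G \<Longrightarrow> g \<in> G \<Longrightarrow> h \<in> G \<Longrightarrow> (\<lambda>\<alpha>. min (g \<alpha>) (h \<alpha>)) \<in> G"
  by (auto simp: l_perm_group_def)

lemma lpg_maxid: "l_perm_group G \<Longrightarrow> g \<in> G \<Longrightarrow> (\<lambda>\<alpha>. max (g \<alpha>) \<alpha>) \<in> G"
proof -
  assume a: "l_perm_group G" "g \<in> G"
  have "id \<in> G" using a by (auto simp: l_perm_group_def)
  from lpg_max[OF a this] show ?thesis by simp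
qed

lemma lpg_minid: "l_perm_group G \<Longrightarrow> g \<in> G \<Longrightarrow> (\<lambda>\<alpha>. min (g \<alpha>) \<alpha>) \<in> G"
proof -
  assume a: "l_perm_group G" "g \<in> G"
  have "id \<in> G" using a by (auto simp: l_perm_group_def)
  from lpg_min[OF a this] show ?thesis by simp
qed

lemma o2: "o2_transitive G \<Longrightarrow> (\<alpha>::'a::linorder) < \<beta> \<Longrightarrow> \<gamma> < \<delta> \<Longrightarrow> \<exists>g\<in>G. g \<alpha> = \<gamma> \<and> g \<beta> = \<delta>"
  by (auto simp: o2_transitive_def)

lemma o3:
  fixes p1 p2 p3 q1 q2 q3 :: "'a::linorder"
  assumes G: "l_perm_group G" "o2_transitive G"
    and p: "p1 < p2" "p2 < p3" and q: "q1 < q2" "q2 < q3"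
  shows "\<exists>f\<in>G. f p1 = q1 \<and> f p2 = q2 \<and> f p3 = q3"
proof -
  obtain f1 where f1: "f1 \<in> G" "f1 p1 = q1" "f1 p2 = q2" using o2[OF G(2) p(1) q(1)] by blast
  have sm: "strict_mono f1" using lpg_aut[OF G(1) f1(1)] by blast
  define x where "x = f1 p3"
  have hx: "f1 p3 = x" by (simp add: x_def)
  have qx: "q2 < x" unfolding x_def using sm p f1 by (metis strict_mono_less)
  consider "x = q3" | "x < q3" | "q3 < x" by fastforce
  then show ?thesis
  proof cases
    case 1 then show ?thesis using f1 x_def by blast
  next
    case 2
    obtain e where e: "e \<in> G" "e q1 = q1" "e x = q3" using o2[OF G(2), of q1 x q1 q3] q qx by force
    obtain t where t: "t \<in> G" "t q2 = q2" "t x = q3" using o2[OF G(2), of q2 x q2 q3] q qx by force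
    define t2 where "t2 = (\<lambda>z. min (max (t z) z) (max (e z) z))"
    have "t2 \<in> G" unfolding t2_def using lpg_min[OF G(1) lpg_maxid[OF G(1) t(1)] lpg_maxid[OF G(1) e(1)]] .
    moreover have "pmult f1 t2 p1 = q1" "pmult f1 t2 p2 = q2" "pmult f1 t2 p3 = q3"
      using f1 e t 2 q qx unfolding pmult_def t2_def by (auto simp: hx)
    ultimately show ?thesis using lpg_mult[OF G(1) f1(1)] by blast
  next
    case 3
    obtain e where e: "e \<in> G" "e q1 = q1" "e x = q3" using o2[OF G(2), of q1 x q1 q3] q qx by force
    obtain t where t: "t \<in> G" "t q2 = q2" "t x = q3" using o2[OF G(2), of q2 x q2 q3] q qx by force
    define t2 where "t2 = (\<lambda>z. max (min (t z) z) (min (e z) z))"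
    have "t2 \<in> G" unfolding t2_def using lpg_max[OF G(1) lpg_minid[OF G(1) t(1)] lpg_minid[OF G(1) e(1)]] .
    moreover have "pmult f1 t2 p1 = q1" "pmult f1 t2 p2 = q2" "pmult f1 t2 p3 = q3"
      using f1 e t 3 q qx unfolding pmult_def t2_def by (auto simp: hx)
    ultimately show ?thesis using lpg_mult[OF G(1) f1(1)] by blast
  qed
qed


lemma core:
  fixes A B :: "'a::linorder \<Rightarrow> 'a"
  assumes G: "l_perm_group G" "o2_transitive G" and AG: "A \<in> G" and BG: "B \<in> G"
    and disj: "supp A \<inter> supp B = {}" and a0: "A a0 \<noteq> a0" and t: "t \<in> supp B"
    and up: "a0 < A a0 \<Longrightarrow> t < a0" and dn: "A a0 < a0 \<Longrightarrow> a0 < t"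
  shows "\<exists>f\<in>G. \<exists>m\<in>G. pmult (pcomm (pinv A) (pconj A f)) (pcomm (pinv B) (pconj A m))
     \<noteq> pmult (pcomm (pinv B) (pconj A m)) (pcomm (pinv A) (pconj A f))"
proof -
  have bA: "bij A" and sA: "strict_mono A" using lpg_aut[OF G(1) AG] by auto
  have bB: "bij B" using lpg_aut[OF G(1) BG] by auto
  define a1 where "a1 = A a0"
  define am where "am = inv A a0"
  have Aam: "A am = a0" unfolding am_def using bA by (meson bij_inv_eq_iff)
  have At: "A t = t" using t disj unfolding supp_def by blast
  have Bt: "B t \<noteq> t" using t unfolding supp_def by blast
  have a1s: "A a1 \<noteq> a1" unfolding a1_def using a0 bA by (metis bij_pointE)
  have Ba0: "B a0 = a0" using a0 disj unfolding supp_def by blast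
  have Ba1: "B a1 = a1" using a1s disj unfolding supp_def by blast
  have ord: "(am < a0 \<and> a0 < a1) \<or> (a1 < a0 \<and> a0 < am)"
  proof -
    have "am \<noteq> a0" using Aam a0 by auto
    hence "am < a0 \<or> a0 < am" by auto
    thus ?thesis using sA Aam unfolding a1_def by (metis strict_mono_less)
  qed
  obtain f where f: "f \<in> G" "f a0 = t" "f a1 = a1"
  proof -
    { assume o: "am < a0 \<and> a0 < a1"
      hence "t < a0" using up a1_def by blast
      hence "\<exists>f\<in>G. f a0 = t \<and> f a1 = a1" using o2[OF G(2), of a0 a1 t a1] o by auto }
    moreover
    { assume o: "a1 < a0 \<and> a0 < am"
      hence "a0 < t" using dn a1_def by blast
      hence "\<exists>f\<in>G. f a0 = t \<and> f a1 = a1" using o2[OF G(2), of a1 a0 a1 t] o by force }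
    ultimately show ?thesis using ord that by blast
  qed
  obtain m where m: "m \<in> G" "m am = t" "m a0 = a0" "m a1 = a1"
  proof -
    { assume o: "am < a0 \<and> a0 < a1"
      hence "t < a0" using up a1_def by blast
      hence "\<exists>f\<in>G. f am = t \<and> f a0 = a0 \<and> f a1 = a1" using o3[OF G, of am a0 a1 t a0 a1] o by auto }
    moreover
    { assume o: "a1 < a0 \<and> a0 < am"
      hence "a0 < t" using dn a1_def by blast
      hence "\<exists>f\<in>G. f am = t \<and> f a0 = a0 \<and> f a1 = a1" using o3[OF G, of a1 a0 am a1 a0 t] o by auto }
    ultimately show ?thesis using ord that by blast
  qed
  have bf: "bij f" using lpg_aut[OF G(1) f(1)] by auto
  have bm: "bij m" using lpg_aut[OF G(1) m(1)] by auto
  define y where "y = pconj A f"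
  define w where "w = pconj A m"
  have yeq: "y = f \<circ> A \<circ> inv f" unfolding y_def pconj_def pmult_def pinv_def by auto
  have weq: "w = m \<circ> A \<circ> inv m" unfolding w_def pconj_def pmult_def pinv_def by auto
  have by': "bij y" unfolding yeq using bf bA by (simp add: bij_comp bij_imp_bij_inv)
  have bw: "bij w" unfolding weq using bm bA by (simp add: bij_comp bij_imp_bij_inv)
  define u where "u = pcomm (pinv A) y"
  define v where "v = pcomm (pinv B) w"
  have ueq: "\<And>z. u z = y (inv A (inv y (A z)))"
    unfolding u_def pcomm_def pmult_def pinv_def using inv_inv_eq[OF bA] by simp
  have veq: "\<And>z. v z = w (inv B (inv w (B z)))"
    unfolding v_def pcomm_def pmult_def pinv_def using inv_inv_eq[OF bB] by simp
  have bu: "inj u"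
  proof -
    have "u = y \<circ> inv A \<circ> inv y \<circ> A" using ueq by auto
    thus ?thesis using by' bA by (simp add: bij_comp bij_imp_bij_inv bij_is_inj)
  qed
  have ifa: "inv f t = a0" using bf f(2) by (metis bij_inv_eq_iff)
  have yt: "y t = a1" unfolding yeq using ifa f(3) a1_def by simp
  have iya1: "inv y a1 = t" using by' yt by (metis bij_inv_eq_iff)
  have iAt: "inv A t = t" using bA At by (metis bij_inv_eq_iff)
  have ua0: "u a0 = a1" using ueq iya1 iAt yt a1_def by simp
  have imt: "inv m t = am" using bm m(2) by (metis bij_inv_eq_iff)
  have ima0: "inv m a0 = a0" using bm m(3) by (metis bij_inv_eq_iff)
  have wt: "w t = a0" unfolding weq using imt Aam m(3) by simp
  have wa0: "w a0 = a1" unfolding weq using ima0 m(4) a1_def by simp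
  have iwa0: "inv w a0 = t" using bw wt by (metis bij_inv_eq_iff)
  have iwa1: "inv w a1 = a0" using bw wa0 by (metis bij_inv_eq_iff)
  have iBa0: "inv B a0 = a0" using bB Ba0 by (metis bij_inv_eq_iff)
  have iBt: "inv B t \<noteq> t" using bB Bt by (metis bij_inv_eq_iff)
  have va1: "v a1 = a1" using veq Ba1 iwa1 iBa0 wa0 by simp
  have va0: "v a0 \<noteq> a0"
  proof -
    have "v a0 = w (inv B t)" using veq Ba0 iwa0 by simp
    moreover have "w (inv B t) \<noteq> w t" using iBt bw by (metis bij_pointE)
    ultimately show ?thesis using wt by simp
  qed
  have "pmult u v a0 \<noteq> pmult v u a0"
  proof -
    have "pmult u v a0 = a1" unfolding pmult_def using ua0 va1 by simp
    moreover have "pmult v u a0 \<noteq> a1" unfolding pmult_def using va0 bu ua0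
      by (metis comp_apply injD)
    ultimately show ?thesis by simp
  qed
  hence "pmult u v \<noteq> pmult v u" by metis
  thus ?thesis using f(1) m(1) unfolding u_def v_def y_def w_def by blast
qed


lemma conj_mult: "bij g \<Longrightarrow> bij k \<Longrightarrow> pconj h (pmult g k) = pconj (pconj h g) k"
  unfolding pconj_def pmult_def pinv_def by (simp add: o_inv_distrib comp_assoc)

theorem lemma3p1:
  fixes G :: "('a::linorder \<Rightarrow> 'a) set" and g h :: "'a \<Rightarrow> 'a"
  assumes "l_perm_group G" and "o2_transitive G"
    and "g \<in> G" and "h \<in> G" and "h \<noteq> id"
    and "supp h \<inter> supp (pconj h g) = {}"
  shows "\<exists>f\<in>G. \<exists>k\<in>G.
    pmult (pcomm (pinv h) (pconj h f)) (pcomm (pinv (pconj h g)) (pconj h (pmult g k)))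
    \<noteq> pmult (pcomm (pinv (pconj h g)) (pconj h (pmult g k))) (pcomm (pinv h) (pconj h f))"
proof -
  note G = assms(1,2)
  have bg: "bij g" and sg: "strict_mono g" using lpg_aut[OF G(1) assms(3)] by auto
  have bh: "bij h" using lpg_aut[OF G(1) assms(4)] by auto
  obtain a where a: "h a \<noteq> a" using assms(5) by (metis eq_id_iff)
  define h2 where "h2 = pconj h g"
  have h2G: "h2 \<in> G" unfolding h2_def pconj_def
    using assms(3,4) G(1) by (metis lpg_inv lpg_mult)
  define b where "b = g a"
  have h2eq: "h2 = g \<circ> h \<circ> inv g" unfolding h2_def pconj_def pmult_def pinv_def by auto
  have h2b: "h2 b = g (h a)" unfolding h2eq b_def using bg by (simp add: bij_is_inj inv_f_f)
  have bs: "b \<in> supp h2" unfolding supp_def using h2b a bg b_def by (metis bij_pointE mem_Collect_eq)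
  have as: "a \<in> supp h" unfolding supp_def using a by simp
  have disj: "supp h \<inter> supp h2 = {}" using assms(6) h2_def by simp
  have ab: "a \<noteq> b" using as bs disj by blast
  have dirb: "b < h2 b \<longleftrightarrow> a < h a" "h2 b < b \<longleftrightarrow> h a < a"
    using sg h2b unfolding b_def by (auto simp: strict_mono_less)
  consider "(a < h a \<and> b < a) \<or> (h a < a \<and> a < b)" | "(a < h a \<and> a < b) \<or> (h a < a \<and> b < a)"
    using a ab by fastforce
  then show ?thesis
  proof cases
    case 1
    obtain f m where fm: "f \<in> G" "m \<in> G"
      "pmult (pcomm (pinv h) (pconj h f)) (pcomm (pinv h2) (pconj h m))
       \<noteq> pmult (pcomm (pinv h2) (pconj h m)) (pcomm (pinv h) (pconj h f))"
    proof -
      have u1: "a < h a \<Longrightarrow> b < a" and d1: "h a < a \<Longrightarrow> a < b" using 1 by auto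
      show ?thesis using core[OF G assms(4) h2G disj a bs u1 d1] that by blast
    qed
    define k where "k = pmult (pinv g) m"
    have kG: "k \<in> G" unfolding k_def using G(1) assms(3) fm(2) by (metis lpg_inv lpg_mult)
    have "pmult g k = m" unfolding k_def pmult_def pinv_def using bg
      by (simp add: comp_assoc bij_is_inj)
    thus ?thesis using fm kG h2_def by metis
  next
    case 2
    obtain f2 m2 where fm: "f2 \<in> G" "m2 \<in> G"
      "pmult (pcomm (pinv h2) (pconj h2 f2)) (pcomm (pinv h) (pconj h2 m2))
       \<noteq> pmult (pcomm (pinv h) (pconj h2 m2)) (pcomm (pinv h2) (pconj h2 f2))"
      using core[OF G h2G assms(4) _ _ as, of b] disj bs dirb 2 unfolding supp_def
      by (auto simp: Int_commute)
    have bf2: "bij f2" using lpg_aut[OF G(1) fm(1)] by auto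
    have bm2: "bij m2" using lpg_aut[OF G(1) fm(2)] by auto
    have fG: "pmult g m2 \<in> G" using G(1) assms(3) fm(2) by (metis lpg_mult)
    have c1: "pconj h (pmult g m2) = pconj h2 m2" using conj_mult[OF bg bm2] h2_def by simp
    have c2: "pconj h (pmult g f2) = pconj h2 f2" using conj_mult[OF bg bf2] h2_def by simp
    show ?thesis using fm fG c1 c2 h2_def by metis
  qed
qed

end
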